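(* Let $D$ be a pv-monoid (idempotent, with symmetric valuation function), $P$ a nonempty finite set of ports, and let $\zeta=\bigoplus_{i\in I}\left(d_i\otimes\sum_{j\in J_i}m_{i,j}\right)\in PCL(D,P)$ be a formula in full normal form, where $I=\{1,\dots,n\}$. Then (i) $*\zeta\equiv\bigoplus_{\emptyset\neq I'\subseteq I}\left(\mathrm{val}(d_i)_{i\in I'}\otimes\left(\biguplus_{i\in I'}\sum_{j\in J_i}m_{i,j}\right)\right)$; (ii) $( *\zeta)\otimes\left(\biguplus_{i\in I}\sum_{j\in J_i}m_{i,j}\right)\equiv\mathrm{val}(d_1,\dots,d_n)\otimes\left(\biguplus_{i\in I}\sum_{j\in J_i}m_{i,j}\right)$. Here $\mathrm{val}(d_i)_{i\in I'}$ denotes $\mathrm{val}$ applied to the values $d_i$, $i\in I'$, in any order, and $\biguplus$ denotes iterated $\uplus$ (in any fixed bracketing).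
   Context: A valuation monoid $(D,\oplus,\mathrm{val},0)$ consists of a commutative monoid $(D,\oplus,0)$ and a map $\mathrm{val}:D^+\to D$ ($D^+$ = nonempty finite sequences over $D$) with $\mathrm{val}(d)=d$ and $\mathrm{val}(d_1,\dots,d_n)=0$ whenever some $d_i=0$. A pv-monoid $(D,\oplus,\mathrm{val},\otimes,0,1)$ is a valuation monoid with a binary operation $\otimes$ and an element $1$ such that $\mathrm{val}(1,\dots,1)=1$ for any $n\ge1$ arguments, $0\otimes d=d\otimes0=0$, $1\otimes d=d\otimes1=d$. Standing assumption: $D$ is idempotent ($d\oplus d=d$) and $\mathrm{val}$ is symmetric (invariant under permutation of arguments). $I(P)$ is the set of nonempty subsets of $P$, $C(P)$ the set of nonempty subsets of $I(P)$. PIL formulas: $\phi::=true\mid p\mid\overline{\phi}\mid\phi\vee\phi$ ($p\in P$), $\alpha\models_i p$ iff $p\in\alpha$, negation and disjunction as usual, $\wedge$ via De Morgan. A full monomial is a PIL formula $\bigwedge_{p\in P_+}p\wedge\bigwedge_{p\in P_-}\overline p$ with $P_+\cup P_-=P$, $P_+\cap P_-=\emptyset$. PCL formulas: $f::=true\mid\phi\mid\neg f\mid f\sqcup f\mid f+f$; $\gamma\models\phi$ iff every $\alpha\in\gamma$ satisfies $\phi$; $\neg,\sqcup$ are complement and union; $\gamma\models f_1+f_2$ iff $\gamma=\gamma_1\cup\gamma_2$ with $\gamma_1,\gamma_2\in C(P)$, $\gamma_1\models f_1,\gamma_2\models f_2$. $\sum$ denotes $+$-combination. w$_{\text{pvm}}$PCL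 formulas ($PCL(D,P)$): $\zeta::=d\mid f\mid\zeta\oplus\zeta\mid\zeta\otimes\zeta\mid\zeta\uplus\zeta\mid *\zeta$; semantics $\|\zeta\|:C(P)\to D$: $\|d\|(\gamma)=d$; $\|f\|(\gamma)\in\{0,1\}$ is $1$ iff $\gamma\models f$; $\oplus,\otimes$ pointwise; $\|\zeta_1\uplus\zeta_2\|(\gamma)=\bigoplus(\|\zeta_1\|(\gamma_1)\otimes\|\zeta_2\|(\gamma_2))$ over disjoint $\gamma_1,\gamma_2\in C(P)$ with union $\gamma$; $\|*\zeta\|(\gamma)=\bigoplus_{n>0}\bigoplus\mathrm{val}(\|\zeta\|(\gamma_1),\dots,\|\zeta\|(\gamma_n))$ over pairwise disjoint $\gamma_1,\dots,\gamma_n\in C(P)$ with union $\gamma$. $\equiv$ means equality of semantics on all of $C(P)$. A formula $\bigoplus_{i\in I}\left(d_i\otimes\sum_{j\in J_i}m_{i,j}\right)$ (finite nonempty index sets, $d_i\in D$, full monomials $m_{i,j}$) is in full normal form; full normal forms are required to satisfy: (i) $j\ne j'$ implies $m_{i,j}\not\equiv m_{i,j'}$; (ii) $i\ne i'$ implies $\sum_{j\in J_i}m_{i,j}\not\equiv\sum_{j\in J_{i'}}m_{i',j}$. *)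

theory Defs
  imports Main "HOL-Library.Multiset"
begin

text \<open>A pv-monoid is given by (pl, vl, tm, z, e): the commutative monoid (D, pl, z),
  the valuation function vl (only its values on nonempty lists matter), the binary
  operation tm and the unit element e.\<close>

definition pv_monoid ::
  "('d \<Rightarrow> 'd \<Rightarrow> 'd) \<Rightarrow> ('d list \<Rightarrow> 'd) \<Rightarrow> ('d \<Rightarrow> 'd \<Rightarrow> 'd) \<Rightarrow> 'd \<Rightarrow> 'd \<Rightarrow> bool" where
  "pv_monoid pl vl tm z e \<longleftrightarrow>
     comm_monoid pl z
   \<and> (\<forall>d. vl [d] = d)
   \<and> (\<forall>ds. ds \<noteq> [] \<and> z \<in> set ds \<longrightarrow> vl ds = z)
   \<and> (\<forall>n\<ge>1. vl (replicate n e) = e)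
   \<and> (\<forall>d. tm z d = z \<and> tm d z = z)
   \<and> (\<forall>d. tm e d = d \<and> tm d e = d)"

definition idempotent_pv :: "('d \<Rightarrow> 'd \<Rightarrow> 'd) \<Rightarrow> bool" where
  "idempotent_pv pl \<longleftrightarrow> (\<forall>d. pl d d = d)"

definition symmetric_val :: "('d list \<Rightarrow> 'd) \<Rightarrow> bool" where
  "symmetric_val vl \<longleftrightarrow> (\<forall>xs ys. xs \<noteq> [] \<and> mset xs = mset ys \<longrightarrow> vl xs = vl ys)"

definition bigplus :: "('d \<Rightarrow> 'd \<Rightarrow> 'd) \<Rightarrow> 'd \<Rightarrow> ('a \<Rightarrow> 'd) \<Rightarrow> 'a set \<Rightarrow> 'd" where
  "bigplus pl z g A = comm_monoid_set.F pl z g A"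

definition IP :: "'p set \<Rightarrow> 'p set set" where
  "IP P = {\<alpha>. \<alpha> \<noteq> {} \<and> \<alpha> \<subseteq> P}"

definition CP :: "'p set \<Rightarrow> 'p set set set" where
  "CP P = {\<gamma>. \<gamma> \<noteq> {} \<and> \<gamma> \<subseteq> IP P}"

datatype 'p pil = PTrue | PAtom 'p | PNot "'p pil" | POr "'p pil" "'p pil"

fun pil_sat :: "'p set \<Rightarrow> 'p pil \<Rightarrow> bool" where
  "pil_sat \<alpha> PTrue = True"
| "pil_sat \<alpha> (PAtom p) = (p \<in> \<alpha>)"
| "pil_sat \<alpha> (PNot \<phi>) = (\<not> pil_sat \<alpha> \<phi>)"
| "pil_sat \<alpha> (POr \<phi> \<psi>) = (pil_sat \<alpha> \<phi> \<or> pil_sat \<alpha> \<psi>)"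

definition PAnd :: "'p pil \<Rightarrow> 'p pil \<Rightarrow> 'p pil" where
  "PAnd \<phi> \<psi> = PNot (POr (PNot \<phi>) (PNot \<psi>))"

definition lit :: "'p set \<Rightarrow> 'p \<Rightarrow> 'p pil" where
  "lit Pp p = (if p \<in> Pp then PAtom p else PNot (PAtom p))"

definition conj_list :: "'p pil list \<Rightarrow> 'p pil" where
  "conj_list xs = foldl PAnd (hd xs) (tl xs)"

definition is_full_monomial :: "'p set \<Rightarrow> 'p pil \<Rightarrow> bool" where
  "is_full_monomial P m \<longleftrightarrow>
     (\<exists>Pp xs. Pp \<subseteq> P \<and> distinct xs \<and> set xs = P \<and> m = conj_list (map (lit Pp) xs))"

datatype 'p pcl = CTrue | CPil "'p pil" | CNot "'p pcl" | CSqcup "'p pcl" "'p pcl"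
  | CPlus "'p pcl" "'p pcl"

fun pcl_sat :: "'p set \<Rightarrow> 'p set set \<Rightarrow> 'p pcl \<Rightarrow> bool" where
  "pcl_sat P \<gamma> CTrue = True"
| "pcl_sat P \<gamma> (CPil \<phi>) = (\<forall>\<alpha>\<in>\<gamma>. pil_sat \<alpha> \<phi>)"
| "pcl_sat P \<gamma> (CNot f) = (\<not> pcl_sat P \<gamma> f)"
| "pcl_sat P \<gamma> (CSqcup f g) = (pcl_sat P \<gamma> f \<or> pcl_sat P \<gamma> g)"
| "pcl_sat P \<gamma> (CPlus f g) =
     (\<exists>\<gamma>1\<in>CP P. \<exists>\<gamma>2\<in>CP P. \<gamma> = \<gamma>1 \<union> \<gamma>2 \<and> pcl_sat P \<gamma>1 f \<and> pcl_sat P \<gamma>2 g)"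

definition pcl_equiv :: "'p set \<Rightarrow> 'p pcl \<Rightarrow> 'p pcl \<Rightarrow> bool" where
  "pcl_equiv P f g \<longleftrightarrow> (\<forall>\<gamma>\<in>CP P. pcl_sat P \<gamma> f = pcl_sat P \<gamma> g)"

definition plus_list :: "'p pcl list \<Rightarrow> 'p pcl" where
  "plus_list xs = foldl CPlus (hd xs) (tl xs)"

datatype ('d, 'p) wpcl = WConst 'd | WPcl "'p pcl" | WOplus "('d,'p) wpcl" "('d,'p) wpcl"
  | WOtimes "('d,'p) wpcl" "('d,'p) wpcl" | WUplus "('d,'p) wpcl" "('d,'p) wpcl"
  | WStar "('d,'p) wpcl"

definition disj_seqs :: "'p set \<Rightarrow> 'p set set \<Rightarrow> 'p set set list set" where
  "disj_seqs P \<gamma> = {gs. gs \<noteq> [] \<and> set gs \<subseteq> CP P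
      \<and> (\<forall>i<length gs. \<forall>j<length gs. i \<noteq> j \<longrightarrow> gs ! i \<inter> gs ! j = {})
      \<and> \<Union> (set gs) = \<gamma>}"

fun wsem :: "('d \<Rightarrow> 'd \<Rightarrow> 'd) \<Rightarrow> ('d list \<Rightarrow> 'd) \<Rightarrow> ('d \<Rightarrow> 'd \<Rightarrow> 'd) \<Rightarrow> 'd \<Rightarrow> 'd \<Rightarrow>
    'p set \<Rightarrow> ('d,'p) wpcl \<Rightarrow> 'p set set \<Rightarrow> 'd" where
  "wsem pl vl tm z e P (WConst d) \<gamma> = d"
| "wsem pl vl tm z e P (WPcl f) \<gamma> = (if pcl_sat P \<gamma> f then e else z)"
| "wsem pl vl tm z e P (WOplus a b) \<gamma> = pl (wsem pl vl tm z e P a \<gamma>) (wsem pl vl tm z e P b \<gamma>)"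
| "wsem pl vl tm z e P (WOtimes a b) \<gamma> = tm (wsem pl vl tm z e P a \<gamma>) (wsem pl vl tm z e P b \<gamma>)"
| "wsem pl vl tm z e P (WUplus a b) \<gamma> =
     bigplus pl z (\<lambda>(\<gamma>1, \<gamma>2). tm (wsem pl vl tm z e P a \<gamma>1) (wsem pl vl tm z e P b \<gamma>2))
       {(\<gamma>1, \<gamma>2). \<gamma>1 \<in> CP P \<and> \<gamma>2 \<in> CP P \<and> \<gamma>1 \<inter> \<gamma>2 = {} \<and> \<gamma>1 \<union> \<gamma>2 = \<gamma>}"
| "wsem pl vl tm z e P (WStar a) \<gamma> =
     bigplus pl z (\<lambda>gs. vl (map (wsem pl vl tm z e P a) gs)) (disj_seqs P \<gamma>)"

definition wequiv :: "('d \<Rightarrow> 'd \<Rightarrow> 'd) \<Rightarrow> ('d list \<Rightarrow> 'd) \<Rightarrow> ('d \<Rightarrow> 'd \<Rightarrow> 'd) \<Rightarrow> 'd \<Rightarrow> 'd \<Rightarrow>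
    'p set \<Rightarrow> ('d,'p) wpcl \<Rightarrow> ('d,'p) wpcl \<Rightarrow> bool" where
  "wequiv pl vl tm z e P a b \<longleftrightarrow> (\<forall>\<gamma>\<in>CP P. wsem pl vl tm z e P a \<gamma> = wsem pl vl tm z e P b \<gamma>)"

definition oplus_list :: "('d,'p) wpcl list \<Rightarrow> ('d,'p) wpcl" where
  "oplus_list xs = foldl WOplus (hd xs) (tl xs)"

definition uplus_list :: "('d,'p) wpcl list \<Rightarrow> ('d,'p) wpcl" where
  "uplus_list xs = foldl WUplus (hd xs) (tl xs)"

definition mono_sum :: "nat set \<Rightarrow> (nat \<Rightarrow> 'p pil) \<Rightarrow> 'p pcl" where
  "mono_sum J m = plus_list (map (\<lambda>j. CPil (m j)) (sorted_list_of_set J))"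

definition fnf_formula :: "nat \<Rightarrow> (nat \<Rightarrow> 'd) \<Rightarrow> (nat \<Rightarrow> nat set) \<Rightarrow> (nat \<Rightarrow> nat \<Rightarrow> 'p pil)
    \<Rightarrow> ('d,'p) wpcl" where
  "fnf_formula n d J m =
     oplus_list (map (\<lambda>i. WOtimes (WConst (d i)) (WPcl (mono_sum (J i) (m i)))) [1..<Suc n])"

definition full_normal_form :: "'p set \<Rightarrow> nat \<Rightarrow> (nat \<Rightarrow> nat set) \<Rightarrow> (nat \<Rightarrow> nat \<Rightarrow> 'p pil) \<Rightarrow> bool" where
  "full_normal_form P n J m \<longleftrightarrow>
     n \<ge> 1
   \<and> (\<forall>i\<in>{1..n}. finite (J i) \<and> J i \<noteq> {} \<and> (\<forall>j\<in>J i. is_full_monomial P (m i j)))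
   \<and> (\<forall>i\<in>{1..n}. \<forall>j\<in>J i. \<forall>j'\<in>J i. j \<noteq> j' \<longrightarrow> \<not> pcl_equiv P (CPil (m i j)) (CPil (m i j')))
   \<and> (\<forall>i\<in>{1..n}. \<forall>i'\<in>{1..n}. i \<noteq> i' \<longrightarrow>
        \<not> pcl_equiv P (mono_sum (J i) (m i)) (mono_sum (J i') (m i')))"

end

theory Submission
  imports Defs
begin


locale idm = comm_monoid f z for f :: "'d \<Rightarrow> 'd \<Rightarrow> 'd" and z +
  assumes idem: "f x x = x"
begin

sublocale cms: comm_monoid_set f z ..

lemma F_insert_idem: "finite A \<Longrightarrow> cms.F g (insert x A) = f (g x) (cms.F g A)"
  by (metis assoc cms.insert_if cms.insert_remove idem)

lemma F_image: "finite A \<Longrightarrow> cms.F h (g ` A) = cms.F (h \<circ> g) A"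
  by (induction A rule: finite_induct) (auto simp: F_insert_idem)

lemma F_id_image: "finite A \<Longrightarrow> cms.F g A = cms.F id (g ` A)"
  using F_image[of A id g] by simp

lemma F_remove_z: "finite S \<Longrightarrow> cms.F id S = cms.F id (S - {z})"
proof (cases "z \<in> S")
  case True
  assume "finite S"
  then have "cms.F id S = f (id z) (cms.F id (S - {z}))" using True by (rule cms.remove)
  then show ?thesis by simp
qed simp

lemma F_values: "finite A \<Longrightarrow> cms.F g A = cms.F id (g ` A - {z})"
proof -
  assume a: "finite A"
  have "cms.F g A = cms.F id (g ` A)" by (rule F_id_image[OF a])
  also have "\<dots> = cms.F id (g ` A - {z})" by (rule F_remove_z) (use a in simp)
  finally show ?thesis .
qed

lemma F_if: "finite A \<Longrightarrow> cms.F (\<lambda>p. if Q p then c else z) A = (if \<exists>p\<in>A. Q p then c else z)"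
  by (induction A rule: finite_induct) (auto simp: F_insert_idem idem)

lemma F_single_z: "cms.F id ({v} - {z}) = v"
  by (cases "v = z") auto

end



lemma pil_foldl_and: "pil_sat \<alpha> (foldl PAnd a ys) \<longleftrightarrow> pil_sat \<alpha> a \<and> (\<forall>y\<in>set ys. pil_sat \<alpha> y)"
  by (induction ys arbitrary: a) (auto simp: PAnd_def)

lemma pil_conj_list: "L \<noteq> [] \<Longrightarrow> pil_sat \<alpha> (conj_list L) \<longleftrightarrow> (\<forall>y\<in>set L. pil_sat \<alpha> y)"
  unfolding conj_list_def by (cases L) (auto simp: pil_foldl_and)

definition uniq :: "'p set \<Rightarrow> 'p pcl \<Rightarrow> bool" where
  "uniq P f \<longleftrightarrow> (\<forall>\<gamma>\<in>CP P. \<forall>\<gamma>'\<in>CP P. pcl_sat P \<gamma> f \<and> pcl_sat P \<gamma>' f \<longrightarrow> \<gamma> = \<gamma>')"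

lemma uniq_monomial:
  assumes "is_full_monomial P mm" "P \<noteq> {}"
  shows "uniq P (CPil mm)"
proof -
  obtain Pp xs where h: "Pp \<subseteq> P" "distinct xs" "set xs = P" "mm = conj_list (map (lit Pp) xs)"
    using assms unfolding is_full_monomial_def by blast
  have ne: "map (lit Pp) xs \<noteq> []" using h assms by auto
  have key: "\<alpha> = Pp" if "\<alpha> \<in> IP P" "pil_sat \<alpha> mm" for \<alpha>
  proof -
    have "\<forall>x\<in>P. pil_sat \<alpha> (lit Pp x)"
      using that h ne by (auto simp: pil_conj_list)
    then have "\<forall>x\<in>P. (x \<in> \<alpha>) = (x \<in> Pp)"
      by (auto simp: lit_def split: if_splits)
    then show ?thesis using that h unfolding IP_def by blast
  qed
  have "\<gamma> = {Pp}" if "\<gamma> \<in> CP P" "pcl_sat P \<gamma> (CPil mm)" for \<gamma>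
    using that key unfolding CP_def by auto
  then show ?thesis unfolding uniq_def by auto
qed

lemma uniq_plus: "uniq P f \<Longrightarrow> uniq P g \<Longrightarrow> uniq P (CPlus f g)"
  unfolding uniq_def by auto

lemma uniq_foldl: "uniq P a \<Longrightarrow> \<forall>y\<in>set ys. uniq P y \<Longrightarrow> uniq P (foldl CPlus a ys)"
  by (induction ys arbitrary: a) (auto simp: uniq_plus)

lemma uniq_plus_list: "xs \<noteq> [] \<Longrightarrow> \<forall>y\<in>set xs. uniq P y \<Longrightarrow> uniq P (plus_list xs)"
  unfolding plus_list_def by (cases xs) (auto simp: uniq_foldl)

lemma uniq_mono_sum:
  assumes "finite J" "J \<noteq> {}" "\<forall>j\<in>J. is_full_monomial P (mm j)" "P \<noteq> {}"
  shows "uniq P (mono_sum J mm)"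
  unfolding mono_sum_def
  using assms by (intro uniq_plus_list) (auto intro: uniq_monomial)

lemma finite_CP: "finite P \<Longrightarrow> finite (CP P)"
  unfolding CP_def IP_def by (rule finite_subset[of _ "Pow (Pow P)"]) auto

lemma disj_seqs_distinct:
  assumes "gs \<in> disj_seqs P \<gamma>" shows "distinct gs"
proof -
  have "\<forall>g\<in>set gs. g \<noteq> {}" using assms unfolding disj_seqs_def CP_def by auto
  moreover have "\<forall>i<length gs. \<forall>j<length gs. i \<noteq> j \<longrightarrow> gs ! i \<inter> gs ! j = {}"
    using assms unfolding disj_seqs_def by blast
  ultimately show ?thesis unfolding distinct_conv_nth
    by (metis inf.idem nth_mem)
qed

lemma finite_disj_seqs: assumes "finite P" shows "finite (disj_seqs P \<gamma>)"
proof -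
  have "disj_seqs P \<gamma> \<subseteq> {gs. set gs \<subseteq> CP P \<and> length gs \<le> card (CP P)}"
  proof
    fix gs assume a: "gs \<in> disj_seqs P \<gamma>"
    then have "distinct gs" "set gs \<subseteq> CP P" using disj_seqs_distinct unfolding disj_seqs_def by auto
    then show "gs \<in> {gs. set gs \<subseteq> CP P \<and> length gs \<le> card (CP P)}"
      using finite_CP[OF assms] by (metis card_mono distinct_card mem_Collect_eq)
  qed
  then show ?thesis using finite_lists_length_le[OF finite_CP[OF assms]] finite_subset by blast
qed




locale setting =
  fixes pl :: "'d \<Rightarrow> 'd \<Rightarrow> 'd" and vl :: "'d list \<Rightarrow> 'd" and tm :: "'d \<Rightarrow> 'd \<Rightarrow> 'd"
    and z e :: 'd and P :: "'p set" and n :: nat and d :: "nat \<Rightarrow> 'd"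
    and J :: "nat \<Rightarrow> nat set" and m :: "nat \<Rightarrow> nat \<Rightarrow> 'p pil"
  assumes pv: "pv_monoid pl vl tm z e"
    and idp: "idempotent_pv pl"
    and sym: "symmetric_val vl"
    and finP: "finite P" and Pne: "P \<noteq> {}"
    and fnf: "full_normal_form P n J m"
begin

sublocale idm pl z
  using pv idp unfolding pv_monoid_def idempotent_pv_def idm_def idm_axioms_def by auto

lemma tm_z1[simp]: "tm z x = z" and tm_z2[simp]: "tm x z = z"
  and tm_e1[simp]: "tm e x = x" and tm_e2[simp]: "tm x e = x"
  using pv unfolding pv_monoid_def by auto

lemma vl_z: "ds \<noteq> [] \<Longrightarrow> z \<in> set ds \<Longrightarrow> vl ds = z"
  using pv unfolding pv_monoid_def by auto

lemma bigplus_eq: "bigplus pl z = cms.F"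
  unfolding bigplus_def by (simp add: fun_eq_iff)

abbreviation W where "W \<equiv> wsem pl vl tm z e P"
abbreviation s where "s i \<equiv> mono_sum (J i) (m i)"

definition sat where "sat i \<gamma> \<longleftrightarrow> \<gamma> \<in> CP P \<and> pcl_sat P \<gamma> (s i)"
definition Sg where "Sg i = (SOME \<gamma>. sat i \<gamma>)"
definition decS where "decS S \<gamma> \<longleftrightarrow> (\<forall>i\<in>S. \<exists>g. sat i g)
   \<and> (\<forall>i\<in>S. \<forall>i'\<in>S. i \<noteq> i' \<longrightarrow> Sg i \<inter> Sg i' = {}) \<and> (\<Union>i\<in>S. Sg i) = \<gamma>"
definition ix where "ix \<gamma> = (SOME i. i \<in> {1..n} \<and> sat i \<gamma>)"
abbreviation \<zeta> where "\<zeta> \<equiv> fnf_formula n d J m"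
definition SL where "SL = set (filter (\<lambda>I'. I' \<noteq> []) (subseqs [1..<Suc n]))"
definition V where "V \<gamma> = {vl (map d I') | I'. I' \<in> SL \<and> decS (set I') \<gamma>}"

lemma n1: "n \<ge> 1" using fnf unfolding full_normal_form_def by auto

lemma uniq_s: "i \<in> {1..n} \<Longrightarrow> uniq P (s i)"
  using fnf Pne unfolding full_normal_form_def by (intro uniq_mono_sum) auto

lemma sat_uniq: "i \<in> {1..n} \<Longrightarrow> sat i \<gamma> \<Longrightarrow> sat i \<gamma>' \<Longrightarrow> \<gamma> = \<gamma>'"
  using uniq_s unfolding uniq_def sat_def by blast

lemma sat_inj: assumes "i \<in> {1..n}" "i' \<in> {1..n}" "sat i \<gamma>" "sat i' \<gamma>" shows "i = i'"
proof (rule ccontr)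
  assume "i \<noteq> i'"
  then have "\<not> pcl_equiv P (s i) (s i')" using fnf assms unfolding full_normal_form_def by blast
  then obtain \<gamma>' where g: "\<gamma>' \<in> CP P" "pcl_sat P \<gamma>' (s i) \<noteq> pcl_sat P \<gamma>' (s i')"
    unfolding pcl_equiv_def by blast
  then show False using sat_uniq[of i \<gamma> \<gamma>'] sat_uniq[of i' \<gamma> \<gamma>'] assms unfolding sat_def by blast
qed

lemma Sg_sat: "sat i \<gamma> \<Longrightarrow> sat i (Sg i)"
  unfolding Sg_def by (rule someI)

lemma Sg_eq: "i \<in> {1..n} \<Longrightarrow> sat i \<gamma> \<Longrightarrow> Sg i = \<gamma>"
  using Sg_sat sat_uniq by blast

lemma oplus_foldl: "W (foldl WOplus a xs) \<gamma> = pl (W a \<gamma>) (cms.F (\<lambda>x. W x \<gamma>) (set xs))"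
proof (induction xs arbitrary: a)
  case Nil then show ?case by simp
next
  case (Cons x xs) then show ?case by (simp add: F_insert_idem assoc)
qed

lemma oplus_list_sem: "xs \<noteq> [] \<Longrightarrow> W (oplus_list xs) \<gamma> = cms.F (\<lambda>x. W x \<gamma>) (set xs)"
  unfolding oplus_list_def by (cases xs) (auto simp: oplus_foldl F_insert_idem)

lemma zeta_sem: "W \<zeta> \<gamma> = cms.F (\<lambda>i. tm (d i) (if pcl_sat P \<gamma> (s i) then e else z)) {1..n}"
proof -
  have "W \<zeta> \<gamma> = cms.F (\<lambda>x. W x \<gamma>)
     ((\<lambda>i. WOtimes (WConst (d i)) (WPcl (s i))) ` {1..n})"
    unfolding fnf_formula_def using n1
    by (subst oplus_list_sem) (simp_all only: list.set_map set_upt atLeastLessThanSuc_atLeastAtMost map_is_Nil_conv upt_eq_Nil_conv, simp)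
  also have "\<dots> = cms.F (\<lambda>i. tm (d i) (if pcl_sat P \<gamma> (s i) then e else z)) {1..n}"
    by (subst F_image) (auto simp: o_def)
  finally show ?thesis .
qed

lemma zeta_val: assumes "i \<in> {1..n}" "sat i \<gamma>" shows "W \<zeta> \<gamma> = d i"
proof -
  have "W \<zeta> \<gamma> = pl (tm (d i) (if pcl_sat P \<gamma> (s i) then e else z))
      (cms.F (\<lambda>i. tm (d i) (if pcl_sat P \<gamma> (s i) then e else z)) ({1..n} - {i}))"
    unfolding zeta_sem using assms by (intro cms.remove) auto
  also have "cms.F (\<lambda>i. tm (d i) (if pcl_sat P \<gamma> (s i) then e else z)) ({1..n} - {i}) = z"
  proof (rule cms.neutral, intro ballI)
    fix i' assume i': "i' \<in> {1..n} - {i}"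
    have "\<not> pcl_sat P \<gamma> (s i')"
      using sat_inj[of i i' \<gamma>] assms i' unfolding sat_def by auto
    then show "tm (d i') (if pcl_sat P \<gamma> (s i') then e else z) = z" by simp
  qed
  finally show ?thesis using assms unfolding sat_def by simp
qed

lemma zeta_z: assumes "\<gamma> \<in> CP P" "\<forall>i\<in>{1..n}. \<not> sat i \<gamma>" shows "W \<zeta> \<gamma> = z"
  unfolding zeta_sem using assms unfolding sat_def by (intro cms.neutral) auto

end



context setting begin

lemma uplus_snoc: "xs \<noteq> [] \<Longrightarrow> uplus_list (xs @ [x]) = WUplus (uplus_list xs) x"
  unfolding uplus_list_def by (cases xs) auto

definition Pairs where "Pairs \<gamma> = {(\<gamma>1, \<gamma>2). \<gamma>1 \<in> CP P \<and> \<gamma>2 \<in> CP P \<and> \<gamma>1 \<inter> \<gamma>2 = {} \<and> \<gamma>1 \<union> \<gamma>2 = \<gamma>}"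

lemma finite_Pairs: "finite (Pairs \<gamma>)"
  by (rule finite_subset[of _ "CP P \<times> CP P"]) (auto simp: Pairs_def finite_CP[OF finP])

lemma decS_single: "i \<in> {1..n} \<Longrightarrow> \<gamma> \<in> CP P \<Longrightarrow> decS {i} \<gamma> \<longleftrightarrow> sat i \<gamma>"
  unfolding decS_def using Sg_eq Sg_sat by auto

lemma Sg_CP: "sat i g \<Longrightarrow> Sg i \<in> CP P"
  using Sg_sat sat_def by blast

lemma decS_snoc:
  assumes "xs \<noteq> []" "set xs \<subseteq> {1..n}" "x \<in> {1..n}" "x \<notin> set xs"
  shows "(\<exists>p\<in>Pairs \<gamma>. decS (set xs) (fst p) \<and> sat x (snd p)) \<longleftrightarrow> decS (insert x (set xs)) \<gamma>"
proof
  assume "\<exists>p\<in>Pairs \<gamma>. decS (set xs) (fst p) \<and> sat x (snd p)"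
  then obtain \<gamma>1 \<gamma>2 where p: "(\<gamma>1, \<gamma>2) \<in> Pairs \<gamma>" "decS (set xs) \<gamma>1" "sat x \<gamma>2" by auto
  have sx: "Sg x = \<gamma>2" using Sg_eq assms p by blast
  have "Sg i \<subseteq> \<gamma>1" if "i \<in> set xs" for i using p(2) that unfolding decS_def by auto
  then show "decS (insert x (set xs)) \<gamma>"
    using p sx unfolding decS_def Pairs_def by auto
next
  assume a: "decS (insert x (set xs)) \<gamma>"
  define \<gamma>1 where "\<gamma>1 = (\<Union>i\<in>set xs. Sg i)"
  obtain g where sg: "sat x g" using a unfolding decS_def by auto
  have c1: "\<gamma>1 \<in> CP P"
  proof -
    obtain i where i: "i \<in> set xs" using assms(1) by (cases xs) auto
    have "\<forall>i\<in>set xs. Sg i \<in> CP P" using a Sg_CP unfolding decS_def by blast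
    then show ?thesis using i unfolding \<gamma>1_def CP_def by auto
  qed
  have "(\<gamma>1, Sg x) \<in> Pairs \<gamma>"
    using a c1 Sg_CP[OF sg] assms(4) unfolding Pairs_def decS_def \<gamma>1_def by auto
  moreover have "decS (set xs) \<gamma>1" using a unfolding decS_def \<gamma>1_def by auto
  ultimately show "\<exists>p\<in>Pairs \<gamma>. decS (set xs) (fst p) \<and> sat x (snd p)"
    using Sg_sat[OF sg] by force
qed

lemma U_sem:
  "I' \<noteq> [] \<Longrightarrow> distinct I' \<Longrightarrow> set I' \<subseteq> {1..n} \<Longrightarrow> \<gamma> \<in> CP P \<Longrightarrow>
   W (uplus_list (map (\<lambda>i. WPcl (s i)) I')) \<gamma> = (if decS (set I') \<gamma> then e else z)"
proof (induction I' arbitrary: \<gamma> rule: rev_induct)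
  case Nil then show ?case by simp
next
  case (snoc x xs)
  show ?case
  proof (cases "xs = []")
    case True
    then show ?thesis using snoc.prems decS_single[of x \<gamma>] by (auto simp: uplus_list_def sat_def)
  next
    case False
    have "W (uplus_list (map (\<lambda>i. WPcl (s i)) (xs @ [x]))) \<gamma>
       = cms.F (\<lambda>(\<gamma>1, \<gamma>2). tm (W (uplus_list (map (\<lambda>i. WPcl (s i)) xs)) \<gamma>1) (W (WPcl (s x)) \<gamma>2)) (Pairs \<gamma>)"
      using False by (simp add: uplus_snoc bigplus_eq Pairs_def)
    also have "\<dots> = cms.F (\<lambda>p. if decS (set xs) (fst p) \<and> sat x (snd p) then e else z) (Pairs \<gamma>)"
    proof (rule cms.cong)
      fix p assume p: "p \<in> Pairs \<gamma>"
      obtain \<gamma>1 \<gamma>2 where pp: "p = (\<gamma>1, \<gamma>2)" by force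
      have "W (uplus_list (map (\<lambda>i. WPcl (s i)) xs)) \<gamma>1 = (if decS (set xs) \<gamma>1 then e else z)"
        using snoc p pp False unfolding Pairs_def by auto
      then show "(case p of (\<gamma>1, \<gamma>2) \<Rightarrow> tm (W (uplus_list (map (\<lambda>i. WPcl (s i)) xs)) \<gamma>1) (W (WPcl (s x)) \<gamma>2))
          = (if decS (set xs) (fst p) \<and> sat x (snd p) then e else z)"
        using p pp unfolding Pairs_def sat_def by auto
    qed simp
    also have "\<dots> = (if \<exists>p\<in>Pairs \<gamma>. decS (set xs) (fst p) \<and> sat x (snd p) then e else z)"
      by (rule F_if[OF finite_Pairs])
    also have "\<dots> = (if decS (set (xs @ [x])) \<gamma> then e else z)"
      using decS_snoc[of xs x \<gamma>] snoc.prems False by auto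
    finally show ?thesis .
  qed
qed

end



context setting begin

lemma set_upt1: "set [1..<Suc n] = {1..n}"
  by (simp only: set_upt atLeastLessThanSuc_atLeastAtMost)

lemma SL_props: assumes "I' \<in> SL" shows "I' \<noteq> [] \<and> distinct I' \<and> set I' \<subseteq> {1..n}"
proof -
  define L where "L = [1..<Suc n]"
  have L: "distinct L" "set L = {1..n}" unfolding L_def by (simp, rule set_upt1)
  have a: "I' \<in> set (subseqs L)" "I' \<noteq> []" using assms unfolding SL_def L_def by auto
  have "set I' \<in> Pow (set L)" using a(1) subseqs_powset[of L] by blast
  then show ?thesis using a L subseqs_distinctD[of I' L] by auto
qed

lemma SL_exists: assumes "S \<subseteq> {1..n}" "S \<noteq> {}" shows "\<exists>ys\<in>SL. set ys = S"
proof -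
  define L where "L = [1..<Suc n]"
  have L: "set L = {1..n}" unfolding L_def by (rule set_upt1)
  obtain ys where "ys \<in> set (subseqs L)" "set ys = S"
    using subset_subseqs[of S L] assms L by auto
  then show ?thesis using assms unfolding SL_def L_def[symmetric] by auto
qed

lemma finite_SL: "finite SL" unfolding SL_def by simp

lemma star_sem: assumes "\<gamma> \<in> CP P" shows "W (WStar \<zeta>) \<gamma> = cms.F id (V \<gamma> - {z})"
proof -
  have "W (WStar \<zeta>) \<gamma> = cms.F (\<lambda>gs. vl (map (W \<zeta>) gs)) (disj_seqs P \<gamma>)"
    by (simp add: bigplus_eq)
  also have "\<dots> = cms.F id ((\<lambda>gs. vl (map (W \<zeta>) gs)) ` disj_seqs P \<gamma> - {z})"
    by (rule F_values[OF finite_disj_seqs[OF finP]])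
  also have "(\<lambda>gs. vl (map (W \<zeta>) gs)) ` disj_seqs P \<gamma> - {z} = V \<gamma> - {z}"
  proof
    show "(\<lambda>gs. vl (map (W \<zeta>) gs)) ` disj_seqs P \<gamma> - {z} \<subseteq> V \<gamma> - {z}"
    proof
      fix v assume "v \<in> (\<lambda>gs. vl (map (W \<zeta>) gs)) ` disj_seqs P \<gamma> - {z}"
      then obtain gs where gs: "gs \<in> disj_seqs P \<gamma>" "v = vl (map (W \<zeta>) gs)" "v \<noteq> z" by auto
      have gsne: "gs \<noteq> []" and cps: "\<forall>g\<in>set gs. g \<in> CP P" and un: "\<Union>(set gs) = \<gamma>"
        and pw: "\<forall>i<length gs. \<forall>j<length gs. i \<noteq> j \<longrightarrow> gs ! i \<inter> gs ! j = {}"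
        using gs(1) unfolding disj_seqs_def by auto
      have dgs: "distinct gs" using disj_seqs_distinct[OF gs(1)] .
      have good: "\<forall>g\<in>set gs. \<exists>i\<in>{1..n}. sat i g"
      proof (rule ccontr)
        assume "\<not> (\<forall>g\<in>set gs. \<exists>i\<in>{1..n}. sat i g)"
        then obtain g where g: "g \<in> set gs" "\<forall>i\<in>{1..n}. \<not> sat i g" by auto
        then have "z \<in> set (map (W \<zeta>) gs)" using zeta_z cps by force
        then show False using vl_z gs gsne by auto
      qed
      have ixp: "ix g \<in> {1..n} \<and> sat (ix g) g" if "g \<in> set gs" for g
        using good that unfolding ix_def by (metis (mono_tags, lifting) someI_ex)
      have Sgix: "Sg (ix g) = g" if "g \<in> set gs" for g using ixp[OF that] Sg_eq by blast
      define iz where "iz = map ix gs"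
      have meq: "map (W \<zeta>) gs = map d iz" unfolding iz_def using ixp zeta_val by auto
      have inj: "inj_on ix (set gs)" by (metis Sgix inj_onI)
      have dis: "distinct iz" unfolding iz_def using inj dgs by (simp add: distinct_map)
      have sis: "set iz \<subseteq> {1..n}" unfolding iz_def using ixp by auto
      have dec: "decS (set iz) \<gamma>"
        unfolding decS_def
      proof (intro conjI ballI impI)
        fix i assume "i \<in> set iz" then show "\<exists>g. sat i g" unfolding iz_def using ixp by auto
      next
        fix i i' assume a: "i \<in> set iz" "i' \<in> set iz" "i \<noteq> i'"
        then obtain t t' where t: "t < length gs" "t' < length gs" "i = ix (gs ! t)" "i' = ix (gs ! t')"
          unfolding iz_def by (auto simp: in_set_conv_nth)
        then have "t \<noteq> t'" using a by auto
        then show "Sg i \<inter> Sg i' = {}" using pw t Sgix by auto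
      next
        have "(\<Union>i\<in>set iz. Sg i) = (\<Union>g\<in>set gs. Sg (ix g))" unfolding iz_def by simp
        also have "\<dots> = \<Union>(set gs)" using Sgix by auto
        finally show "(\<Union>i\<in>set iz. Sg i) = \<gamma>" using un by simp
      qed
      obtain ys where ys: "ys \<in> SL" "set ys = set iz"
        using SL_exists[OF sis] gsne unfolding iz_def by auto
      have "mset ys = mset iz"
        using SL_props[OF ys(1)] dis ys(2) set_eq_iff_mset_eq_distinct by blast
      then have "vl (map d iz) = vl (map d ys)"
        using sym gsne unfolding symmetric_val_def iz_def by (metis Nil_is_map_conv mset_map)
      then have "v \<in> V \<gamma>" unfolding V_def using gs(2) meq ys dec by auto
      then show "v \<in> V \<gamma> - {z}" using gs by auto
    qed
  next
    show "V \<gamma> - {z} \<subseteq> (\<lambda>gs. vl (map (W \<zeta>) gs)) ` disj_seqs P \<gamma> - {z}"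
    proof
      fix v assume "v \<in> V \<gamma> - {z}"
      then obtain I' where I': "I' \<in> SL" "decS (set I') \<gamma>" "v = vl (map d I')" "v \<noteq> z"
        unfolding V_def by auto
      have pr: "I' \<noteq> []" "distinct I'" "set I' \<subseteq> {1..n}" using SL_props[OF I'(1)] by auto
      have si: "sat i (Sg i)" if "i \<in> set I'" for i using I'(2) that Sg_sat unfolding decS_def by blast
      define gs where "gs = map Sg I'"
      have "gs \<in> disj_seqs P \<gamma>"
        unfolding disj_seqs_def
      proof (intro CollectI conjI allI impI)
        show "gs \<noteq> []" using pr unfolding gs_def by simp
        show "set gs \<subseteq> CP P" unfolding gs_def using si sat_def by auto
        show "\<Union> (set gs) = \<gamma>" unfolding gs_def using I'(2) unfolding decS_def by simp
      next
        fix i j assume "i < length gs" "j < length gs" "i \<noteq> j"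
        then show "gs ! i \<inter> gs ! j = {}"
          using I'(2) pr(2) unfolding gs_def decS_def by (auto simp: nth_eq_iff_index_eq)
      qed
      moreover have "map (W \<zeta>) gs = map d I'"
        unfolding gs_def using si pr zeta_val by auto
      ultimately show "v \<in> (\<lambda>gs. vl (map (W \<zeta>) gs)) ` disj_seqs P \<gamma> - {z}"
        using I' by force
    qed
  qed
  finally show ?thesis .
qed

abbreviation U where "U I' \<equiv> uplus_list (map (\<lambda>i. WPcl (s i)) I')"

lemma rhs_sem: assumes "\<gamma> \<in> CP P"
  shows "W (oplus_list (map (\<lambda>I'. WOtimes (WConst (vl (map d I'))) (U I'))
              (filter (\<lambda>I'. I' \<noteq> []) (subseqs [1..<Suc n])))) \<gamma> = cms.F id (V \<gamma> - {z})"
proof -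
  let ?h = "\<lambda>I'. WOtimes (WConst (vl (map d I'))) (U I')"
  have ne: "filter (\<lambda>I'. I' \<noteq> []) (subseqs [1..<Suc n]) \<noteq> []"
    using subseqs_refl[of "[1..<Suc n]"] n1 by (auto simp: filter_empty_conv)
  have "W (oplus_list (map ?h (filter (\<lambda>I'. I' \<noteq> []) (subseqs [1..<Suc n])))) \<gamma>
      = cms.F (\<lambda>x. W x \<gamma>) (?h ` SL)"
    using ne by (subst oplus_list_sem) (auto simp: SL_def)
  also have "\<dots> = cms.F (\<lambda>I'. W (?h I') \<gamma>) SL"
    by (subst F_image[OF finite_SL]) (simp add: o_def)
  also have "\<dots> = cms.F id ((\<lambda>I'. W (?h I') \<gamma>) ` SL - {z})"
    by (rule F_values[OF finite_SL])
  also have "(\<lambda>I'. W (?h I') \<gamma>) ` SL = (\<lambda>I'. if decS (set I') \<gamma> then vl (map d I') else z) ` SL"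
    using SL_props U_sem assms by (intro image_cong) auto
  also have "(\<lambda>I'. if decS (set I') \<gamma> then vl (map d I') else z) ` SL - {z} = V \<gamma> - {z}"
    unfolding V_def by auto
  finally show ?thesis .
qed

lemma part2: assumes "\<gamma> \<in> CP P"
  shows "W (WOtimes (WStar \<zeta>) (U [1..<Suc n])) \<gamma> = W (WOtimes (WConst (vl (map d [1..<Suc n]))) (U [1..<Suc n])) \<gamma>"
proof -
  have Ueq: "W (U [1..<Suc n]) \<gamma> = (if decS {1..n} \<gamma> then e else z)"
    using U_sem[of "[1..<Suc n]" \<gamma>] n1 assms unfolding set_upt1 by (simp del: upt_Suc)
  show ?thesis
  proof (cases "decS {1..n} \<gamma>")
    case False then show ?thesis using Ueq by simp
  next
    case True
    have "V \<gamma> = {vl (map d [1..<Suc n])}"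
    proof
      show "V \<gamma> \<subseteq> {vl (map d [1..<Suc n])}"
      proof
        fix v assume "v \<in> V \<gamma>"
        then obtain I' where I': "I' \<in> SL" "decS (set I') \<gamma>" "v = vl (map d I')" unfolding V_def by auto
        have pr: "I' \<noteq> []" "distinct I'" "set I' \<subseteq> {1..n}" using SL_props[OF I'(1)] by auto
        have "set I' = {1..n}"
        proof (rule ccontr)
          assume "set I' \<noteq> {1..n}"
          then have "\<not> {1..n} \<subseteq> set I'" using subset_antisym[OF pr(3)] by metis
          then obtain i where i: "i \<in> {1..n}" "i \<notin> set I'" unfolding subset_iff by blast
          obtain g where "sat i g" using True i unfolding decS_def by blast
          then have "Sg i \<noteq> {}" using Sg_CP unfolding CP_def by auto
          then obtain \<alpha> where a: "\<alpha> \<in> Sg i" by auto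
          then have "\<alpha> \<in> \<gamma>" using True i unfolding decS_def by auto
          then obtain i' where "i' \<in> set I'" "\<alpha> \<in> Sg i'" using I'(2) unfolding decS_def by auto
          then show False using True i pr a unfolding decS_def by (metis IntI empty_iff subsetD)
        qed
        then have "mset I' = mset [1..<Suc n]"
          using pr(2) set_eq_iff_mset_eq_distinct[of I' "[1..<Suc n]"] set_upt1 distinct_upt by metis
        then have "vl (map d I') = vl (map d [1..<Suc n])"
          using sym pr unfolding symmetric_val_def by (metis Nil_is_map_conv mset_map)
        then show "v \<in> {vl (map d [1..<Suc n])}" using I' by simp
      qed
    next
      have "[1..<Suc n] \<in> SL" using subseqs_refl[of "[1..<Suc n]"] n1 unfolding SL_def by auto
      then show "{vl (map d [1..<Suc n])} \<subseteq> V \<gamma>" unfolding V_def using True set_upt1 by (metis (mono_tags, lifting) empty_subsetI insert_subset mem_Collect_eq)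
    qed
    then show ?thesis using star_sem[OF assms] Ueq True F_single_z by simp
  qed
qed

end

theorem mainTheorem15:
  fixes pl tm :: "'d \<Rightarrow> 'd \<Rightarrow> 'd" and vl :: "'d list \<Rightarrow> 'd" and z e :: 'd
    and P :: "'p set" and n :: nat and d :: "nat \<Rightarrow> 'd"
    and J :: "nat \<Rightarrow> nat set" and m :: "nat \<Rightarrow> nat \<Rightarrow> 'p pil"
  assumes "pv_monoid pl vl tm z e"
    and "idempotent_pv pl"
    and "symmetric_val vl"
    and "finite P" and "P \<noteq> {}"
    and "full_normal_form P n J m"
  shows "wequiv pl vl tm z e P (WStar (fnf_formula n d J m))
           (oplus_list (map (\<lambda>I'. WOtimes (WConst (vl (map d I')))
                                   (uplus_list (map (\<lambda>i. WPcl (mono_sum (J i) (m i))) I')))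
              (filter (\<lambda>I'. I' \<noteq> []) (subseqs [1..<Suc n]))))
       \<and> wequiv pl vl tm z e P
           (WOtimes (WStar (fnf_formula n d J m))
                    (uplus_list (map (\<lambda>i. WPcl (mono_sum (J i) (m i))) [1..<Suc n])))
           (WOtimes (WConst (vl (map d [1..<Suc n])))
                    (uplus_list (map (\<lambda>i. WPcl (mono_sum (J i) (m i))) [1..<Suc n])))"
proof -
  interpret setting pl vl tm z e P n d J m
    using assms by unfold_locales
  show ?thesis unfolding wequiv_def using star_sem rhs_sem part2 by simp
qed


end
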